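(* If $G$ is a $\mathrm{sat}(n,K_{2,3})$-graph with minimum degree $\delta(G) = 1$, then $e(G) \geq 2n-3$.
   Context: All graphs are finite and simple. A graph $G$ is $K_{2,3}$-saturated if $G$ contains no subgraph isomorphic to $K_{2,3}$, but for every pair of nonadjacent vertices $u,v$, the graph $G+uv$ contains a subgraph isomorphic to $K_{2,3}$. $\mathrm{sat}(n,K_{2,3})$ is the minimum number of edges of a $K_{2,3}$-saturated graph on $n$ vertices, and a $\mathrm{sat}(n,K_{2,3})$-graph is a $K_{2,3}$-saturated graph on $n$ vertices with exactly $\mathrm{sat}(n,K_{2,3})$ edges. $e(G)$ is the number of edges and $\delta(G)$ the minimum degree of $G$. *)

theory Defs
  imports Main
begin

definition simple_graph :: "'a set \<Rightarrow> 'a set set \<Rightarrow> bool" where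
  "simple_graph V E \<longleftrightarrow> finite V \<and>
     (\<forall>e\<in>E. \<exists>u v. e = {u, v} \<and> u \<noteq> v \<and> u \<in> V \<and> v \<in> V)"

definition contains_K23 :: "'a set \<Rightarrow> 'a set set \<Rightarrow> bool" where
  "contains_K23 V E \<longleftrightarrow>
     (\<exists>a1 a2 b1 b2 b3. a1 \<in> V \<and> a2 \<in> V \<and> b1 \<in> V \<and> b2 \<in> V \<and> b3 \<in> V \<and>
        distinct [a1, a2, b1, b2, b3] \<and>
        (\<forall>a\<in>{a1, a2}. \<forall>b\<in>{b1, b2, b3}. {a, b} \<in> E))"

definition K23_saturated :: "'a set \<Rightarrow> 'a set set \<Rightarrow> bool" where
  "K23_saturated V E \<longleftrightarrow> simple_graph V E \<and> \<not> contains_K23 V E \<and>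
     (\<forall>u\<in>V. \<forall>v\<in>V. u \<noteq> v \<and> {u, v} \<notin> E \<longrightarrow> contains_K23 V (insert {u, v} E))"

text \<open>sat(n, K_{2,3}): the minimum number of edges of a K_{2,3}-saturated graph
  on n vertices (vertex set taken to be {0..<n}; the notion is invariant
  under isomorphism).\<close>
definition sat_K23 :: "nat \<Rightarrow> nat" where
  "sat_K23 n = (LEAST m. \<exists>E. K23_saturated {0..<n} E \<and> card E = m)"

definition sat_K23_graph :: "'a set \<Rightarrow> 'a set set \<Rightarrow> bool" where
  "sat_K23_graph V E \<longleftrightarrow> K23_saturated V E \<and> card E = sat_K23 (card V)"

definition degree :: "'a set \<Rightarrow> 'a set set \<Rightarrow> 'a \<Rightarrow> nat" where
  "degree V E v = card {u\<in>V. {u, v} \<in> E}"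

definition min_degree :: "'a set \<Rightarrow> 'a set set \<Rightarrow> nat" where
  "min_degree V E = Min (degree V E ` V)"

end

theory Submission imports Defs begin
lemma double_count:
  assumes "finite C" "finite H" "\<forall>e\<in>H. card (e \<inter> C) = k"
  shows "(\<Sum>w\<in>C. card {e\<in>H. w\<in>e}) = k * card H"
proof -
  have "(\<Sum>w\<in>C. card {e\<in>H. w\<in>e}) = (\<Sum>w\<in>C. \<Sum>e\<in>H. if w\<in>e then 1 else 0)"
    using assms by (intro sum.cong refl) (simp add: sum.If_cases Int_def conj_commute)
  also have "\<dots> = (\<Sum>e\<in>H. \<Sum>w\<in>C. if w\<in>e then 1 else 0)" by (rule sum.swap)
  also have "\<dots> = (\<Sum>e\<in>H. card (e \<inter> C))"
    using assms by (simp add: sum.If_cases Int_commute)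
  also have "\<dots> = k * card H" using assms by simp
  finally show ?thesis .
qed

lemma nbr_bound:
  assumes "finite H" "2 \<le> card S" "\<forall>u\<in>S. {w,u}\<in>H \<and> u\<noteq>w"
  shows "2 \<le> card {e\<in>H. w\<in>e}"
proof -
  have "inj_on (\<lambda>u. {w,u}) S" using assms(3) by (auto simp: inj_on_def doubleton_eq_iff)
  hence "card S = card ((\<lambda>u. {w,u}) ` S)" by (simp add: card_image)
  also have "\<dots> \<le> card {e\<in>H. w\<in>e}" using assms by (intro card_mono) auto
  finally show ?thesis using assms by simp
qed
lemma common:
  assumes sat: "K23_saturated V E" and x: "x\<in>V" and N: "{u\<in>V. {u,x}\<in>E} = {y}"
    and v: "v\<in>V" "v\<noteq>x" "v\<noteq>y"
  shows "2 \<le> card {u\<in>V. u\<noteq>x \<and> {y,u}\<in>E \<and> {v,u}\<in>E}"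
proof -
  have fin: "finite V" using sat by (simp add: K23_saturated_def simple_graph_def)
  have nE: "{x,v} \<notin> E" using N v by (auto simp: insert_commute)
  hence "contains_K23 V (insert {x,v} E)" using sat x v by (auto simp: K23_saturated_def)
  then obtain a1 a2 b1 b2 b3 where K: "a1 \<in> V" "a2 \<in> V" "b1 \<in> V" "b2 \<in> V" "b3 \<in> V"
        "distinct [a1, a2, b1, b2, b3]"
        "\<forall>a\<in>{a1, a2}. \<forall>b\<in>{b1, b2, b3}. {a, b} \<in> insert {x,v} E"
    unfolding contains_K23_def by blast
  have free: "\<not> contains_K23 V E" using sat by (simp add: K23_saturated_def)
  have nb: "\<And>u. u \<in> V \<Longrightarrow> {u,x} \<in> insert {x,v} E \<Longrightarrow> u = y \<or> u = v"
    using N by (auto simp: doubleton_eq_iff)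
  have nb2: "\<And>u. u \<in> V \<Longrightarrow> {x,u} \<in> insert {x,v} E \<Longrightarrow> u = y \<or> u = v"
    using nb by (simp add: insert_commute)
  have e: "{a1,b1} \<in> insert {x,v} E" "{a1,b2} \<in> insert {x,v} E" "{a1,b3} \<in> insert {x,v} E"
          "{a2,b1} \<in> insert {x,v} E" "{a2,b2} \<in> insert {x,v} E" "{a2,b3} \<in> insert {x,v} E"
    using K(7) by simp_all
  have dist: "a1\<noteq>a2" "a1\<noteq>b1" "a1\<noteq>b2" "a1\<noteq>b3" "a2\<noteq>b1" "a2\<noteq>b2" "a2\<noteq>b3"
     "b1\<noteq>b2" "b1\<noteq>b3" "b2\<noteq>b3" using K(6) by simp_all
  have lift: "\<And>a b. {a,b} \<in> insert {x,v} E \<Longrightarrow> a \<noteq> x \<Longrightarrow> b \<noteq> x \<Longrightarrow> {a,b} \<in> E"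
    by (auto simp: doubleton_eq_iff)
  have nxa: "x \<noteq> a1 \<and> x \<noteq> a2"
  proof (rule ccontr)
    assume "\<not> (x \<noteq> a1 \<and> x \<noteq> a2)"
    then have xa: "x = a1 \<or> x = a2" by simp
    have "{x,b1} \<in> insert {x,v} E" "{x,b2} \<in> insert {x,v} E" "{x,b3} \<in> insert {x,v} E"
      using xa e(1-6) by (metis, metis, metis)
    then have "b1 = y \<or> b1 = v" "b2 = y \<or> b2 = v" "b3 = y \<or> b3 = v"
      using nb2[OF K(3)] nb2[OF K(4)] nb2[OF K(5)] by simp_all
    then show False using dist by metis
  qed
  have xin: "x = b1 \<or> x = b2 \<or> x = b3"
  proof (rule ccontr)
    assume xn: "\<not> (x = b1 \<or> x = b2 \<or> x = b3)"
    then have "{a1,b1} \<in> E" "{a1,b2} \<in> E" "{a1,b3} \<in> E" "{a2,b1} \<in> E" "{a2,b2} \<in> E" "{a2,b3} \<in> E"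
      using lift e nxa by blast+
    then have "contains_K23 V E" using K(1-6) unfolding contains_K23_def by blast
    then show False using free by simp
  qed
  have a12: "(a1 = y \<and> a2 = v) \<or> (a1 = v \<and> a2 = y)"
  proof -
    have "{a1,x} \<in> insert {x,v} E" "{a2,x} \<in> insert {x,v} E"
      using xin e(1-6) by (metis insert_commute, metis insert_commute)
    then have "a1 = y \<or> a1 = v" "a2 = y \<or> a2 = v"
      using nb[OF K(1)] nb[OF K(2)] by simp_all
    then show ?thesis using dist by blast
  qed
  have ex: "\<exists>p q. p\<noteq>q \<and> p\<in>V \<and> q\<in>V \<and> p\<noteq>x \<and> q\<noteq>x \<and> {a1,p}\<in>E \<and> {a2,p}\<in>E \<and> {a1,q}\<in>E \<and> {a2,q}\<in>E"
  proof -
    { assume "x = b1"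
      then have "b2 \<noteq> x" "b3 \<noteq> x" using dist by auto
      then have "{a1,b2}\<in>E" "{a1,b3}\<in>E" "{a2,b2}\<in>E" "{a2,b3}\<in>E"
        using lift[OF e(2)] lift[OF e(3)] lift[OF e(5)] lift[OF e(6)] nxa by auto
      then have ?thesis using \<open>b2 \<noteq> x\<close> \<open>b3 \<noteq> x\<close> dist K by (intro exI[of _ b2] exI[of _ b3]) simp }
    moreover
    { assume "x = b2"
      then have "b1 \<noteq> x" "b3 \<noteq> x" using dist by auto
      then have "{a1,b1}\<in>E" "{a1,b3}\<in>E" "{a2,b1}\<in>E" "{a2,b3}\<in>E"
        using lift[OF e(1)] lift[OF e(3)] lift[OF e(4)] lift[OF e(6)] nxa by auto
      then have ?thesis using \<open>b1 \<noteq> x\<close> \<open>b3 \<noteq> x\<close> dist K by (intro exI[of _ b1] exI[of _ b3]) simp }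
    moreover
    { assume "x = b3"
      then have "b1 \<noteq> x" "b2 \<noteq> x" using dist by auto
      then have "{a1,b1}\<in>E" "{a1,b2}\<in>E" "{a2,b1}\<in>E" "{a2,b2}\<in>E"
        using lift[OF e(1)] lift[OF e(2)] lift[OF e(4)] lift[OF e(5)] nxa by auto
      then have ?thesis using \<open>b1 \<noteq> x\<close> \<open>b2 \<noteq> x\<close> dist K by (intro exI[of _ b1] exI[of _ b2]) simp }
    ultimately show ?thesis using xin by blast
  qed
  then obtain p q where "p\<noteq>q" "p\<in>V" "q\<in>V" "p\<noteq>x" "q\<noteq>x" "{a1,p}\<in>E" "{a2,p}\<in>E" "{a1,q}\<in>E" "{a2,q}\<in>E"
    by blast
  then have pq: "p\<noteq>q" "p\<in>V" "q\<in>V" "p\<noteq>x" "q\<noteq>x" "{y,p}\<in>E" "{v,p}\<in>E" "{y,q}\<in>E" "{v,q}\<in>E"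
    using a12 by auto
  have "card {p,q} \<le> card {u\<in>V. u\<noteq>x \<and> {y,u}\<in>E \<and> {v,u}\<in>E}"
    using pq fin by (intro card_mono) auto
  then show ?thesis using pq by simp
qed
theorem lemma4p1:
  fixes V :: "'a set" and E :: "'a set set" and n :: nat
  assumes "card V = n"
    and "sat_K23_graph V E"
    and "min_degree V E = 1"
  shows "int (card E) \<ge> 2 * int n - 3"
proof (cases "finite V \<and> V \<noteq> {}")
  case False
  then have "n = 0" using assms(1) by auto
  then show ?thesis by simp
next
  case True
  have sat: "K23_saturated V E" using assms(2) by (simp add: sat_K23_graph_def)
  have sg: "simple_graph V E" using sat by (simp add: K23_saturated_def)
  have fin: "finite V" using True by simp
  have edge: "\<And>e. e\<in>E \<Longrightarrow> \<exists>u v. e = {u, v} \<and> u \<noteq> v \<and> u \<in> V \<and> v \<in> V"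
    using sg by (simp add: simple_graph_def)
  have noloop: "\<And>u. {u} \<notin> E"
  proof
    fix u assume "{u} \<in> E"
    then obtain a b where ab: "{u} = {a,b}" "a \<noteq> b" using edge by blast
    have "a = u" using ab(1) by (metis insertCI singletonD)
    moreover have "b = u" using ab(1) by (metis insertCI singletonD)
    ultimately show False using ab(2) by simp
  qed
  have EsubPow: "E \<subseteq> Pow V" using edge by blast
  have finE: "finite E" using finite_subset[OF EsubPow] fin by simp
  have "1 \<in> degree V E ` V" using assms(3) True unfolding min_degree_def
    by (metis Min_in finite_imageI image_is_empty)
  then obtain x where x: "x\<in>V" "card {u\<in>V. {u,x}\<in>E} = 1" by (auto simp: degree_def)
  then obtain y where N: "{u\<in>V. {u,x}\<in>E} = {y}" by (meson card_1_singletonE)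
  have y: "y\<in>V" "{y,x}\<in>E" using N by auto
  have yx: "y \<noteq> x" using y noloop by auto
  define C where "C = V - {x,y}"
  define A where "A = {u\<in>V. u\<noteq>x \<and> {y,u}\<in>E}"
  define B where "B = C - A"
  have AC: "A \<subseteq> C" unfolding A_def C_def using noloop by auto
  have finC: "finite C" "finite A" "finite B" using fin AC unfolding C_def B_def
    by (auto intro: finite_subset)
  have cardC: "card C = n - 2" unfolding C_def using x y yx fin assms(1)
    by (simp add: card_Diff_subset)
  have cardAB: "card A + card B = card C" unfolding B_def using AC finC
    by (metis card_Diff_subset le_add_diff_inverse card_mono)
  have com: "\<And>w. w\<in>C \<Longrightarrow> 2 \<le> card {u\<in>A. {w,u}\<in>E}"
  proof -
    fix w assume "w\<in>C"
    then have "2 \<le> card {u\<in>V. u\<noteq>x \<and> {y,u}\<in>E \<and> {w,u}\<in>E}"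
      using common[OF sat x(1) N] unfolding C_def by auto
    moreover have "{u\<in>V. u\<noteq>x \<and> {y,u}\<in>E \<and> {w,u}\<in>E} = {u\<in>A. {w,u}\<in>E}"
      unfolding A_def by auto
    ultimately show "2 \<le> card {u\<in>A. {w,u}\<in>E}" by simp
  qed
  define Y where "Y = (\<lambda>a. {y,a}) ` A"
  define F where "F = {e\<in>E. e \<subseteq> A}"
  define G where "G = {e\<in>E. \<exists>a\<in>A. \<exists>b\<in>B. e = {a,b}}"
  have cardY: "card Y = card A" unfolding Y_def
  proof (rule card_image)
    show "inj_on (\<lambda>a. {y,a}) A" unfolding inj_on_def by (auto simp: doubleton_eq_iff)
  qed
  have finFG: "finite F" "finite G" using finE unfolding F_def G_def by auto
  have F2: "2 * card A \<le> 2 * card F"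
  proof -
    have "(\<Sum>w\<in>A. card {e\<in>F. w\<in>e}) = 2 * card F"
    proof (rule double_count[OF finC(2) finFG(1)], rule ballI)
      fix e assume "e\<in>F"
      then obtain u v where "e = {u,v}" "u\<noteq>v" "e \<subseteq> A" using edge unfolding F_def by blast
      then show "card (e \<inter> A) = 2" by (simp add: Int_absorb2)
    qed
    moreover have "(\<Sum>w\<in>A. 2) \<le> (\<Sum>w\<in>A. card {e\<in>F. w\<in>e})"
    proof (rule sum_mono)
      fix w assume w: "w\<in>A"
      show "2 \<le> card {e\<in>F. w\<in>e}"
      proof (rule nbr_bound[OF finFG(1) com])
        show "w \<in> C" using w AC by auto
        show "\<forall>u\<in>{u \<in> A. {w, u} \<in> E}. {w, u} \<in> F \<and> u \<noteq> w"
          using w noloop unfolding F_def by auto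
      qed
    qed
    ultimately show ?thesis by simp
  qed
  have G2: "2 * card B \<le> card G"
  proof -
    have "(\<Sum>w\<in>B. card {e\<in>G. w\<in>e}) = 1 * card G"
    proof (rule double_count[OF finC(3) finFG(2)], rule ballI)
      fix e assume "e\<in>G"
      then obtain a b where "a\<in>A" "b\<in>B" "e = {a,b}" unfolding G_def by blast
      then have "e \<inter> B = {b}" unfolding B_def by auto
      then show "card (e \<inter> B) = 1" by simp
    qed
    moreover have "(\<Sum>w\<in>B. 2) \<le> (\<Sum>w\<in>B. card {e\<in>G. w\<in>e})"
    proof (rule sum_mono)
      fix w assume w: "w\<in>B"
      show "2 \<le> card {e\<in>G. w\<in>e}"
      proof (rule nbr_bound[OF finFG(2) com])
        show "w \<in> C" using w unfolding B_def by auto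
        show "\<forall>u\<in>{u \<in> A. {w, u} \<in> E}. {w, u} \<in> G \<and> u \<noteq> w"
          using w unfolding G_def B_def by (auto simp: insert_commute)
      qed
    qed
    ultimately show ?thesis by simp
  qed
  have sub: "insert {x,y} (Y \<union> F \<union> G) \<subseteq> E"
    using y unfolding Y_def F_def G_def A_def by (auto simp: insert_commute)
  have finY: "finite Y" unfolding Y_def using finC by simp
  have xA: "x \<notin> A" "y \<notin> A" "x \<notin> B" "y \<notin> B" "x \<notin> C" "y \<notin> C" unfolding A_def B_def C_def using noloop by auto
  have d1: "Y \<inter> F = {}" unfolding Y_def F_def using xA by auto
  have d2: "(Y \<union> F) \<inter> G = {}" unfolding Y_def F_def G_def B_def using xA
    by (auto simp: doubleton_eq_iff)
  have d3: "{x,y} \<notin> Y \<union> F \<union> G" unfolding Y_def F_def G_def using xA yx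
    by (auto simp: doubleton_eq_iff)
  have "card (insert {x,y} (Y \<union> F \<union> G)) = 1 + card Y + card F + card G"
    using d1 d2 d3 finY finFG by (simp add: card_Un_disjoint)
  moreover have "card (insert {x,y} (Y \<union> F \<union> G)) \<le> card E"
    using sub finE by (rule card_mono[rotated])
  moreover have "n \<ge> 2" using x y yx fin assms(1)
    by (metis card_2_iff card_mono empty_subsetI insert_subset)
  ultimately show ?thesis using cardY F2 G2 cardAB cardC by linarith
qed
end
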